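(* Assume Assumption 1 and Assumption 2 with $\delta>1/10$. For any distinct $u,u_1,u_2\in L$, as $n_R\to\infty$, $$\Pr[(u,u_1),(u,u_2),(u_1,u_2)\in E\mid S_L,S_R]=p_{uu_1}p_{uu_2}\cdot\frac{M_{R1}M_{R3}}{M_{R2}^2}\cdot\frac1{w_u}\,(1+o(1))+o(p_{uu_1}p_{uu_2}),$$ where $p_{xy}=\frac{M_{R2}}{M_{R1}^2}\cdot\frac{w_xw_y}{n_R}$.
   Context: Model: left nodes $L$ ($|L|=n_L$), right nodes $R$ ($|R|=n_R$), weight sequences $S_L=(w_u)_{u\in L}$, $S_R=(w_v)_{v\in R}$ of positive reals; $M_{Lk}=\frac1{n_L}\sum_{u\in L}w_u^k$, $M_{Rk}=\frac1{n_R}\sum_{v\in R}w_v^k$. The random bipartite graph $G_b=(L\sqcup R,E_b)$ contains each edge $(u,v)$, $u\in L$, $v\in R$, independently with probability $\min\left(\frac{w_uw_v}{n_RM_{R1}},1\right)$. The projected graph is $G=(L,E)$ with $(u,u')\in E$ for distinct $u,u'\in L$ iff there is $z\in R$ with $(u,z),(u',z)\in E_b$. Assumption 1: $\frac{w_uw_v}{n_RM_{R1}}\le1$ for all $u\in L,v\in R$. Assumption 2 (parameter $\delta>0$), as $n_L,n_R\to\infty$: $\max(S_L\cup S_R)=O(n_R^{1/2-\delta})$, $\min S_L=\Omega(1)$, $M_{R2}=O(M_{R1}^2)$, $M_{R4}=O(n_R^{1-2\delta})$. *)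

theory Defs
  imports "HOL-Probability.Probability" "HOL-Library.Landau_Symbols"
begin

definition moment :: "'a set \<Rightarrow> ('a \<Rightarrow> real) \<Rightarrow> nat \<Rightarrow> real" where
  "moment A w k = (1 / real (card A)) * (\<Sum>x\<in>A. w x ^ k)"

definition bip_prob :: "'b set \<Rightarrow> ('a \<Rightarrow> real) \<Rightarrow> ('b \<Rightarrow> real) \<Rightarrow> 'a \<Rightarrow> 'b \<Rightarrow> real" where
  "bip_prob R wL wR u v = min (wL u * wR v / (real (card R) * moment R wR 1)) 1"

definition bip_graph :: "'a set \<Rightarrow> 'b set \<Rightarrow> ('a \<Rightarrow> real) \<Rightarrow> ('b \<Rightarrow> real) \<Rightarrow> ('a \<times> 'b \<Rightarrow> bool) pmf" where
  "bip_graph L R wL wR = Pi_pmf (L \<times> R) False (\<lambda>(u, v). bernoulli_pmf (bip_prob R wL wR u v))"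

definition proj_edge :: "'b set \<Rightarrow> ('a \<times> 'b \<Rightarrow> bool) \<Rightarrow> 'a \<Rightarrow> 'a \<Rightarrow> bool" where
  "proj_edge R Eb u u' \<longleftrightarrow> u \<noteq> u' \<and> (\<exists>z\<in>R. Eb (u, z) \<and> Eb (u', z))"

definition triangle_prob :: "'a set \<Rightarrow> 'b set \<Rightarrow> ('a \<Rightarrow> real) \<Rightarrow> ('b \<Rightarrow> real) \<Rightarrow> 'a \<Rightarrow> 'a \<Rightarrow> 'a \<Rightarrow> real" where
  "triangle_prob L R wL wR u u1 u2 =
     measure_pmf.prob (bip_graph L R wL wR)
       {Eb. proj_edge R Eb u u1 \<and> proj_edge R Eb u u2 \<and> proj_edge R Eb u1 u2}"

definition proj_p :: "'b set \<Rightarrow> ('a \<Rightarrow> real) \<Rightarrow> ('b \<Rightarrow> real) \<Rightarrow> 'a \<Rightarrow> 'a \<Rightarrow> real" where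
  "proj_p R wL wR x y = moment R wR 2 / (moment R wR 1)^2 * (wL x * wL y / real (card R))"

end

theory Submission
  imports Defs
begin


lemma bonf:
  fixes p :: "'x pmf" and A :: "'i \<Rightarrow> 'x set"
  assumes "finite I"
  shows "measure_pmf.prob p (\<Union>i\<in>I. A i) \<ge> (\<Sum>i\<in>I. measure_pmf.prob p (A i))
          - (\<Sum>i\<in>I. \<Sum>j\<in>I - {i}. measure_pmf.prob p (A i \<inter> A j))"
  using assms
proof (induction I rule: finite_induct)
  case empty then show ?case by simp
next
  case (insert a I)
  let ?P = "measure_pmf.prob p"
  let ?U = "\<Union>i\<in>I. A i"
  have un: "?P (A a \<union> ?U) = ?P (A a) + ?P ?U - ?P (A a \<inter> ?U)"
  proof -
    have 1: "?P (A a \<union> ?U) = ?P (A a) + ?P (?U - A a)"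
      by (rule measure_pmf.finite_measure_Union') simp_all
    have 2: "?P (?U - A a) = ?P ?U - ?P (?U \<inter> A a)"
      by (rule measure_pmf.finite_measure_Diff') simp_all
    have 3: "?P (?U \<inter> A a) = ?P (A a \<inter> ?U)" by (simp only: Int_commute)
    show ?thesis using 1 2 3 by linarith
  qed
  have "A a \<inter> ?U = (\<Union>j\<in>I. A a \<inter> A j)" by blast
  hence "?P (A a \<inter> ?U) = ?P (\<Union>j\<in>I. A a \<inter> A j)" by (rule arg_cong)
  also have "\<dots> \<le> (\<Sum>j\<in>I. ?P (A a \<inter> A j))"
    by (rule measure_pmf.finite_measure_subadditive_finite) (use insert.hyps in auto)
  finally have int: "?P (A a \<inter> ?U) \<le> (\<Sum>j\<in>I. ?P (A a \<inter> A j))" .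
  have ds: "(\<Sum>i\<in>insert a I. \<Sum>j\<in>insert a I - {i}. ?P (A i \<inter> A j))
      = (\<Sum>j\<in>I. ?P (A a \<inter> A j)) + (\<Sum>i\<in>I. ?P (A i \<inter> A a) + (\<Sum>j\<in>I - {i}. ?P (A i \<inter> A j)))"
  proof -
    have e1: "insert a I - {a} = I" using insert by auto
    have e2: "(\<Sum>j\<in>insert a I - {i}. ?P (A i \<inter> A j)) = ?P (A i \<inter> A a) + (\<Sum>j\<in>I - {i}. ?P (A i \<inter> A j))"
      if "i \<in> I" for i
    proof -
      have "insert a I - {i} = insert a (I - {i})" using insert that by auto
      moreover have "a \<notin> I - {i}" using insert by auto
      ultimately show ?thesis using insert by (simp add: sum.insert)
    qed
    have "(\<Sum>i\<in>insert a I. \<Sum>j\<in>insert a I - {i}. ?P (A i \<inter> A j))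
       = (\<Sum>j\<in>insert a I - {a}. ?P (A a \<inter> A j)) + (\<Sum>i\<in>I. \<Sum>j\<in>insert a I - {i}. ?P (A i \<inter> A j))"
      using insert by (simp add: sum.insert)
    also have "\<dots> = (\<Sum>j\<in>I. ?P (A a \<inter> A j)) + (\<Sum>i\<in>I. ?P (A i \<inter> A a) + (\<Sum>j\<in>I - {i}. ?P (A i \<inter> A j)))"
      using e1 e2 by (metis (no_types, lifting) sum.cong)
    finally show ?thesis .
  qed
  have nn: "0 \<le> (\<Sum>i\<in>I. ?P (A i \<inter> A a))" by (simp add: sum_nonneg)
  have "(\<Sum>i\<in>I. ?P (A i \<inter> A a) + (\<Sum>j\<in>I - {i}. ?P (A i \<inter> A j)))
     = (\<Sum>i\<in>I. ?P (A i \<inter> A a)) + (\<Sum>i\<in>I. \<Sum>j\<in>I - {i}. ?P (A i \<inter> A j))"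
    by (rule sum.distrib)
  moreover have "(\<Sum>i\<in>insert a I. ?P (A i)) = ?P (A a) + (\<Sum>i\<in>I. ?P (A i))"
    using insert.hyps by simp
  moreover have "?P (\<Union>i\<in>insert a I. A i) = ?P (A a \<union> ?U)" by simp
  ultimately show ?case using insert.IH un int nn ds by linarith
qed


lemma prob_all:
  fixes q :: "'e \<Rightarrow> real"
  assumes fin: "finite E" and S: "S \<subseteq> E" and q: "\<And>e. e \<in> E \<Longrightarrow> 0 \<le> q e \<and> q e \<le> 1"
  shows "measure_pmf.prob (Pi_pmf E False (\<lambda>e. bernoulli_pmf (q e))) {f. \<forall>e\<in>S. f e} = (\<Prod>e\<in>S. q e)"
proof -
  let ?B = "\<lambda>e. if e \<in> S then {True} else UNIV"
  have "{f. \<forall>e\<in>S. f e} = Pi E ?B" using S by (auto simp: Pi_def)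
  hence "measure_pmf.prob (Pi_pmf E False (\<lambda>e. bernoulli_pmf (q e))) {f. \<forall>e\<in>S. f e}
       = (\<Prod>e\<in>E. measure_pmf.prob (bernoulli_pmf (q e)) (?B e))"
    using measure_Pi_pmf_Pi[OF fin] by simp
  also have "\<dots> = (\<Prod>e\<in>E. if e \<in> S then q e else 1)"
    by (intro prod.cong refl) (use q in \<open>auto simp: measure_pmf_single\<close>)
  also have "\<dots> = (\<Prod>e\<in>S. q e)"
    using prod.If_cases[OF fin, of "\<lambda>e. e \<in> S" q "\<lambda>_. 1"] S
    by (simp add: Int_absorb1)
  finally show ?thesis .
qed



lemma tri_core:
  fixes q :: "'a \<Rightarrow> 'b \<Rightarrow> real" and L :: "'a set" and R :: "'b set"
  assumes finL: "finite L" and finR: "finite R"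
    and q01: "\<And>x z. x \<in> L \<Longrightarrow> z \<in> R \<Longrightarrow> 0 \<le> q x z \<and> q x z \<le> 1"
    and uL: "u \<in> L" and u1L: "u1 \<in> L" and u2L: "u2 \<in> L"
    and d1: "u \<noteq> u1" and d2: "u \<noteq> u2" and d3: "u1 \<noteq> u2"
    and b: "\<And>z. z \<in> R \<Longrightarrow> q u1 z \<le> b \<and> q u2 z \<le> b"
  defines "p \<equiv> Pi_pmf (L \<times> R) False (\<lambda>(x, z). bernoulli_pmf (q x z))"
  shows "(\<Sum>z\<in>R. q u z * q u1 z * q u2 z) - b^2 * (\<Sum>z\<in>R. q u z * q u1 z) * (\<Sum>z\<in>R. q u z * q u2 z)
           \<le> measure_pmf.prob p {Eb. proj_edge R Eb u u1 \<and> proj_edge R Eb u u2 \<and> proj_edge R Eb u1 u2}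
       \<and> measure_pmf.prob p {Eb. proj_edge R Eb u u1 \<and> proj_edge R Eb u u2 \<and> proj_edge R Eb u1 u2}
           \<le> (\<Sum>z\<in>R. q u z * q u1 z * q u2 z)
              + (\<Sum>z\<in>R. q u z * q u1 z) * (\<Sum>z\<in>R. q u z * q u2 z) * (\<Sum>z\<in>R. q u1 z * q u2 z)"
proof -
  let ?P = "measure_pmf.prob p"
  let ?Tri = "{Eb. proj_edge R Eb u u1 \<and> proj_edge R Eb u u2 \<and> proj_edge R Eb u1 u2}"
  define r where "r z = q u z * q u1 z * q u2 z" for z :: 'b
  define A where "A z = {f. \<forall>e\<in>{(u,z),(u1,z),(u2,z)}. f e}" for z :: 'b
  have fin: "finite (L \<times> R)" using finL finR by simp
  have peq: "p = Pi_pmf (L \<times> R) False (\<lambda>e. bernoulli_pmf (case_prod q e))"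
    unfolding p_def by (intro arg_cong[where f="Pi_pmf (L \<times> R) False"]) (auto simp: fun_eq_iff)
  have q01': "\<And>e. e \<in> L \<times> R \<Longrightarrow> 0 \<le> case_prod q e \<and> case_prod q e \<le> 1" using q01 by auto
  have PS: "?P {f. \<forall>e\<in>S. f e} = (\<Prod>e\<in>S. case_prod q e)" if "S \<subseteq> L \<times> R" for S
    unfolding peq by (rule prob_all[OF fin that q01'])
  have PA: "?P (A z) = r z" if z: "z \<in> R" for z
  proof -
    have "?P (A z) = (\<Prod>e\<in>{(u,z),(u1,z),(u2,z)}. case_prod q e)"
      unfolding A_def by (rule PS) (use z uL u1L u2L in auto)
    also have "\<dots> = r z" using d1 d2 d3 by (simp add: r_def)
    finally show ?thesis .
  qed
  have PAA: "?P (A z \<inter> A z') = r z * r z'" if z: "z \<in> R" "z' \<in> R" "z \<noteq> z'" for z z'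
  proof -
    have "A z \<inter> A z' = {f. \<forall>e\<in>{(u,z),(u1,z),(u2,z),(u,z'),(u1,z'),(u2,z')}. f e}"
      unfolding A_def by auto
    hence "?P (A z \<inter> A z') = (\<Prod>e\<in>{(u,z),(u1,z),(u2,z),(u,z'),(u1,z'),(u2,z')}. case_prod q e)"
      by (simp only:) (rule PS, use z uL u1L u2L in auto)
    also have "\<dots> = r z * r z'" using d1 d2 d3 z by (simp add: r_def)
    finally show ?thesis .
  qed
  have rnn: "0 \<le> r z" if "z \<in> R" for z using q01 that uL u1L u2L by (simp add: r_def)
  have b0: "0 \<le> b" if "R \<noteq> {}" using b q01 u1L that by (meson all_not_in_conv order.trans)
  have low1: "?P (\<Union>z\<in>R. A z) \<le> ?P ?Tri"
  proof (rule measure_pmf.finite_measure_mono)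
    show "(\<Union>z\<in>R. A z) \<subseteq> ?Tri" using d1 d2 d3 by (auto simp: A_def proj_edge_def)
  qed simp
  have low2: "?P (\<Union>z\<in>R. A z) \<ge> (\<Sum>z\<in>R. r z) - (\<Sum>z\<in>R. \<Sum>z'\<in>R - {z}. r z * r z')"
  proof -
    have "(\<Sum>z\<in>R. \<Sum>z'\<in>R - {z}. ?P (A z \<inter> A z')) = (\<Sum>z\<in>R. \<Sum>z'\<in>R - {z}. r z * r z')"
      by (intro sum.cong refl) (auto simp: PAA)
    moreover have "(\<Sum>z\<in>R. ?P (A z)) = (\<Sum>z\<in>R. r z)" by (intro sum.cong refl) (simp add: PA)
    ultimately show ?thesis using bonf[OF finR, of p A] by simp
  qed
  have low3: "(\<Sum>z\<in>R. \<Sum>z'\<in>R - {z}. r z * r z') \<le> (\<Sum>z\<in>R. r z) * (\<Sum>z\<in>R. r z)"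
  proof -
    have "(\<Sum>z\<in>R. \<Sum>z'\<in>R - {z}. r z * r z') \<le> (\<Sum>z\<in>R. \<Sum>z'\<in>R. r z * r z')"
      by (intro sum_mono sum_mono2) (use finR rnn in \<open>auto intro: mult_nonneg_nonneg\<close>)
    also have "\<dots> = (\<Sum>z\<in>R. r z) * (\<Sum>z\<in>R. r z)" by (simp add: sum_product)
    finally show ?thesis .
  qed
  have low4: "(\<Sum>z\<in>R. r z) * (\<Sum>z\<in>R. r z)
      \<le> (b * (\<Sum>z\<in>R. q u z * q u1 z)) * (b * (\<Sum>z\<in>R. q u z * q u2 z))"
  proof (cases "R = {}")
    case True then show ?thesis by simp
  next
    case False
    have pw1: "r z \<le> b * (q u z * q u1 z)" if z: "z \<in> R" for z
    proof -
      have "0 \<le> q u z * q u1 z" using q01 z uL u1L by simp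
      moreover have "q u2 z \<le> b" using b z by simp
      ultimately have "(q u z * q u1 z) * q u2 z \<le> (q u z * q u1 z) * b" by (metis mult_left_mono)
      thus ?thesis by (simp add: r_def mult_ac)
    qed
    have pw2: "r z \<le> b * (q u z * q u2 z)" if z: "z \<in> R" for z
    proof -
      have "0 \<le> q u z * q u2 z" using q01 z uL u2L by simp
      moreover have "q u1 z \<le> b" using b z by simp
      ultimately have "(q u z * q u2 z) * q u1 z \<le> (q u z * q u2 z) * b" by (metis mult_left_mono)
      thus ?thesis by (simp add: r_def mult_ac)
    qed
    have s1: "(\<Sum>z\<in>R. r z) \<le> b * (\<Sum>z\<in>R. q u z * q u1 z)"
      unfolding sum_distrib_left by (intro sum_mono pw1)
    have s2: "(\<Sum>z\<in>R. r z) \<le> b * (\<Sum>z\<in>R. q u z * q u2 z)"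
      unfolding sum_distrib_left by (intro sum_mono pw2)
    have r0: "0 \<le> sum r R" by (intro sum_nonneg rnn)
    show ?thesis by (rule mult_mono[OF s1 s2 _ r0]) (use r0 s1 in linarith)
  qed
  have lower: "(\<Sum>z\<in>R. r z) - b^2 * (\<Sum>z\<in>R. q u z * q u1 z) * (\<Sum>z\<in>R. q u z * q u2 z) \<le> ?P ?Tri"
    using low1 low2 low3 low4 by (simp add: power2_eq_square algebra_simps)
  define S6 where "S6 t = (case t of (z, z', z'') \<Rightarrow> {(u,z),(u1,z),(u,z'),(u2,z'),(u1,z''),(u2,z'')})"
    for t :: "'b \<times> 'b \<times> 'b"
  define B where "B t = (case t of (z, z', z'') \<Rightarrow>
      if z \<noteq> z' \<and> z \<noteq> z'' \<and> z' \<noteq> z'' then {f. \<forall>e\<in>S6 t. f e} else {})" for t :: "'b \<times> 'b \<times> 'b"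
  define g where "g t = (case t of (z, z', z'') \<Rightarrow>
      (q u z * q u1 z) * (q u z' * q u2 z') * (q u1 z'' * q u2 z''))" for t :: "'b \<times> 'b \<times> 'b"
  have incl: "?Tri \<subseteq> (\<Union>z\<in>R. A z) \<union> (\<Union>t\<in>R \<times> R \<times> R. B t)"
  proof
    fix f assume "f \<in> ?Tri"
    then obtain z z' z'' where z: "z \<in> R" "f (u,z)" "f (u1,z)" and z': "z' \<in> R" "f (u,z')" "f (u2,z')"
       and z'': "z'' \<in> R" "f (u1,z'')" "f (u2,z'')"
      by (auto simp: proj_edge_def)
    show "f \<in> (\<Union>z\<in>R. A z) \<union> (\<Union>t\<in>R \<times> R \<times> R. B t)"
    proof (cases "z \<noteq> z' \<and> z \<noteq> z'' \<and> z' \<noteq> z''")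
      case True
      hence "f \<in> B (z, z', z'')" using z z' z'' by (auto simp: B_def S6_def)
      thus ?thesis using z z' z'' by blast
    next
      case False
      hence "f \<in> A z \<or> f \<in> A z'" using z z' z'' by (auto simp: A_def)
      thus ?thesis using z z' by blast
    qed
  qed
  have PB: "?P (B t) \<le> g t" if t: "t \<in> R \<times> R \<times> R" for t
  proof -
    obtain z z' z'' where tt: "t = (z, z', z'')" by (cases t) auto
    have zs: "z \<in> R" "z' \<in> R" "z'' \<in> R" using t tt by auto
    have g0: "0 \<le> g t" using q01 zs uL u1L u2L by (simp add: g_def tt)
    show ?thesis
    proof (cases "z \<noteq> z' \<and> z \<noteq> z'' \<and> z' \<noteq> z''")
      case True
      have "?P (B t) = (\<Prod>e\<in>S6 t. case_prod q e)"
        unfolding B_def tt using True by simp (rule PS, use zs uL u1L u2L in \<open>auto simp: S6_def\<close>)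
      also have "\<dots> = g t" using True d1 d2 d3 by (simp add: S6_def g_def tt)
      finally show ?thesis by simp
    next
      case False
      then show ?thesis using g0 by (auto simp: B_def tt)
    qed
  qed
  have sumg: "(\<Sum>t\<in>R \<times> R \<times> R. g t) = (\<Sum>z\<in>R. q u z * q u1 z) * (\<Sum>z\<in>R. q u z * q u2 z) * (\<Sum>z\<in>R. q u1 z * q u2 z)"
  proof -
    have "(\<Sum>t\<in>R \<times> R \<times> R. g t) = (\<Sum>z\<in>R. \<Sum>z'\<in>R. \<Sum>z''\<in>R.
        (q u z * q u1 z) * (q u z' * q u2 z') * (q u1 z'' * q u2 z''))"
      by (simp add: sum.cartesian_product g_def)
    also have "\<dots> = (\<Sum>z\<in>R. (q u z * q u1 z) * (\<Sum>z'\<in>R. (q u z' * q u2 z') * (\<Sum>z''\<in>R. q u1 z'' * q u2 z'')))"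
      by (simp only: sum_distrib_left mult.assoc)
    also have "\<dots> = (\<Sum>z\<in>R. q u z * q u1 z) * ((\<Sum>z\<in>R. q u z * q u2 z) * (\<Sum>z\<in>R. q u1 z * q u2 z))"
      by (simp only: sum_distrib_right)
    also have "\<dots> = (\<Sum>z\<in>R. q u z * q u1 z) * (\<Sum>z\<in>R. q u z * q u2 z) * (\<Sum>z\<in>R. q u1 z * q u2 z)"
      by (simp only: mult.assoc)
    finally show ?thesis .
  qed
  have upper: "?P ?Tri \<le> (\<Sum>z\<in>R. r z) + (\<Sum>t\<in>R \<times> R \<times> R. g t)"
  proof -
    have "?P ?Tri \<le> ?P ((\<Union>z\<in>R. A z) \<union> (\<Union>t\<in>R \<times> R \<times> R. B t))"
      by (rule measure_pmf.finite_measure_mono[OF incl]) simp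
    also have "\<dots> \<le> ?P (\<Union>z\<in>R. A z) + ?P (\<Union>t\<in>R \<times> R \<times> R. B t)"
      by (rule measure_Un_le) simp_all
    also have "?P (\<Union>z\<in>R. A z) \<le> (\<Sum>z\<in>R. ?P (A z))"
      by (rule measure_pmf.finite_measure_subadditive_finite) (use finR in auto)
    also have "(\<Sum>z\<in>R. ?P (A z)) = (\<Sum>z\<in>R. r z)" by (intro sum.cong refl) (simp add: PA)
    also have "?P (\<Union>t\<in>R \<times> R \<times> R. B t) \<le> (\<Sum>t\<in>R \<times> R \<times> R. ?P (B t))"
      by (rule measure_pmf.finite_measure_subadditive_finite) (use finR in auto)
    also have "\<dots> \<le> (\<Sum>t\<in>R \<times> R \<times> R. g t)" by (intro sum_mono PB)
    finally show ?thesis by simp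
  qed
  show ?thesis using lower upper sumg unfolding r_def by simp
qed



lemma inst_bound:
  fixes L :: "'a set" and R :: "'b set" and wL :: "'a \<Rightarrow> real" and wR :: "'b \<Rightarrow> real"
  assumes finL: "finite L" and finR: "finite R" and Rne: "R \<noteq> {}"
    and posL: "\<And>x. x \<in> L \<Longrightarrow> wL x > 0"
    and posR: "\<And>v. v \<in> R \<Longrightarrow> wR v > 0"
    and A1: "\<And>x v. x \<in> L \<Longrightarrow> v \<in> R \<Longrightarrow>
               wL x * wR v / (real (card R) * moment R wR 1) \<le> 1"
    and uL: "u \<in> L" and u1L: "u1 \<in> L" and u2L: "u2 \<in> L"
    and d1: "u \<noteq> u1" and d2: "u \<noteq> u2" and d3: "u1 \<noteq> u2"
    and hX: "\<And>x. x \<in> L \<Longrightarrow> wL x \<le> X"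
    and hK: "moment R wR 2 \<le> K * (moment R wR 1)^2"
  shows "\<bar>triangle_prob L R wL wR u u1 u2
           - proj_p R wL wR u u1 * proj_p R wL wR u u2
             * (moment R wR 1 * moment R wR 3 / (moment R wR 2)^2) * (1 / wL u)\<bar>
         \<le> proj_p R wL wR u u1 * proj_p R wL wR u u2 * (2 * (X^2 * K / real (card R)))"
proof -
  define N where "N = real (card R)"
  define D where "D = (\<Sum>z\<in>R. wR z)"
  define W2 where "W2 = (\<Sum>z\<in>R. wR z ^ 2)"
  define W3 where "W3 = (\<Sum>z\<in>R. wR z ^ 3)"
  have N0: "N > 0" using finR Rne by (simp add: N_def card_gt_0_iff)
  have D0: "D > 0" unfolding D_def by (rule sum_pos[OF finR Rne]) (simp add: posR)
  have W20: "W2 > 0" unfolding W2_def by (rule sum_pos[OF finR Rne]) (metis posR less_irrefl zero_less_power)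
  have W30: "W3 > 0" unfolding W3_def by (rule sum_pos[OF finR Rne]) (metis posR less_irrefl zero_less_power)
  have M1: "moment R wR 1 = D / N" by (simp add: moment_def D_def N_def)
  have M2: "moment R wR 2 = W2 / N" by (simp add: moment_def W2_def N_def)
  have M3: "moment R wR 3 = W3 / N" by (simp add: moment_def W3_def N_def)
  have ND: "real (card R) * moment R wR 1 = D" unfolding M1 N_def[symmetric] using N0 by simp
  define q where "q = bip_prob R wL wR"
  have qeq: "q x z = wL x * wR z / D" if "x \<in> L" "z \<in> R" for x z
    using A1[OF that] unfolding q_def bip_prob_def ND by (simp add: min_def)
  have q01: "0 \<le> q x z \<and> q x z \<le> 1" if "x \<in> L" "z \<in> R" for x z
    using A1[OF that] posL[OF that(1)] posR[OF that(2)] D0 unfolding qeq[OF that] ND by simp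
  have Psum: "(\<Sum>z\<in>R. q x z * q y z) = wL x * wL y * W2 / D^2" if "x \<in> L" "y \<in> L" for x y
  proof -
    have "(\<Sum>z\<in>R. q x z * q y z) = (\<Sum>z\<in>R. (wL x * wL y / D^2) * wR z ^ 2)"
      by (intro sum.cong refl) (simp add: qeq that power2_eq_square)
    thus ?thesis by (simp add: W2_def sum_distrib_left sum_divide_distrib)
  qed
  have pp: "proj_p R wL wR x y = wL x * wL y * W2 / D^2" for x y
    unfolding proj_p_def M1 M2 N_def[symmetric] using N0 D0 by (simp add: field_simps power2_eq_square)
  have main: "(\<Sum>z\<in>R. q u z * q u1 z * q u2 z) = wL u * wL u1 * wL u2 * W3 / D^3"
  proof -
    have "(\<Sum>z\<in>R. q u z * q u1 z * q u2 z) = (\<Sum>z\<in>R. (wL u * wL u1 * wL u2 / D^3) * wR z ^ 3)"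
      by (intro sum.cong refl) (simp add: qeq uL u1L u2L power3_eq_cube)
    thus ?thesis by (simp add: W3_def sum_distrib_left sum_divide_distrib)
  qed
  have target: "proj_p R wL wR u u1 * proj_p R wL wR u u2
             * (moment R wR 1 * moment R wR 3 / (moment R wR 2)^2) * (1 / wL u)
           = wL u * wL u1 * wL u2 * W3 / D^3"
    unfolding pp M1 M2 M3 using N0 D0 W20 posL[OF uL] by (simp add: field_simps power2_eq_square power3_eq_cube)
  define B2 where "B2 = X^2 * K / N"
  have W2K: "W2 \<le> K * D^2 / N"
    using hK N0 unfolding M1 M2 by (simp add: field_simps power2_eq_square)
  have wx2: "wL x ^ 2 \<le> X^2" if "x \<in> L" for x
    using hX[OF that] posL[OF that] by (intro power_mono) auto
  have wz2: "wR z ^ 2 \<le> W2" if "z \<in> R" for z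
    unfolding W2_def by (rule member_le_sum) (use that finR in auto)
  have qsq: "q x z ^ 2 \<le> B2" if "x \<in> L" "z \<in> R" for x z
  proof -
    have "q x z ^ 2 = wL x ^ 2 * wR z ^ 2 / D^2" by (simp add: qeq that power_divide power_mult_distrib)
    also have "\<dots> \<le> X^2 * (K * D^2 / N) / D^2"
      using wx2[OF that(1)] wz2[OF that(2)] W2K D0
      by (intro divide_right_mono mult_mono) auto
    also have "\<dots> = B2" using D0 by (simp add: B2_def)
    finally show ?thesis .
  qed
  have B20: "0 \<le> B2" using qsq[OF u1L] Rne by (meson all_not_in_conv order_trans zero_le_power2)
  define b where "b = sqrt B2"
  have qb: "q x z \<le> b" if "x \<in> L" "z \<in> R" for x z
    unfolding b_def using qsq[OF that] q01[OF that] real_le_rsqrt by blast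
  have b2: "b^2 = B2" using B20 by (simp add: b_def)
  have core: "(\<Sum>z\<in>R. q u z * q u1 z * q u2 z) - b^2 * (\<Sum>z\<in>R. q u z * q u1 z) * (\<Sum>z\<in>R. q u z * q u2 z)
           \<le> triangle_prob L R wL wR u u1 u2
       \<and> triangle_prob L R wL wR u u1 u2
           \<le> (\<Sum>z\<in>R. q u z * q u1 z * q u2 z)
              + (\<Sum>z\<in>R. q u z * q u1 z) * (\<Sum>z\<in>R. q u z * q u2 z) * (\<Sum>z\<in>R. q u1 z * q u2 z)"
    unfolding triangle_prob_def bip_graph_def q_def
    by (rule tri_core[OF finL finR _ uL u1L u2L d1 d2 d3]) (use q01 qb u1L u2L in \<open>auto simp: q_def\<close>)
  have P12: "(\<Sum>z\<in>R. q u1 z * q u2 z) \<le> B2"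
  proof -
    have f1: "wL u1 * wL u2 \<le> X * X"
      using hX[OF u1L] hX[OF u2L] posL[OF u1L] posL[OF u2L] by (intro mult_mono) auto
    have f2: "W2 / D^2 \<le> K / N" using W2K D0 N0 by (simp add: field_simps)
    have f3: "0 \<le> W2 / D^2" using W20 by simp
    have "(wL u1 * wL u2) * (W2 / D^2) \<le> (X * X) * (K / N)"
      by (rule mult_mono[OF f1 f2 _ f3]) simp
    thus ?thesis using Psum[OF u1L u2L] by (simp add: B2_def power2_eq_square)
  qed
  have ppnn: "0 \<le> proj_p R wL wR u u1 * proj_p R wL wR u u2"
    unfolding pp using posL[OF uL] posL[OF u1L] posL[OF u2L] W20 by simp
  have "\<bar>triangle_prob L R wL wR u u1 u2 - wL u * wL u1 * wL u2 * W3 / D^3\<bar>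
      \<le> proj_p R wL wR u u1 * proj_p R wL wR u u2 * (B2 + B2)"
  proof -
    have e1: "(\<Sum>z\<in>R. q u z * q u1 z) = proj_p R wL wR u u1" using Psum[OF uL u1L] pp by simp
    have e2: "(\<Sum>z\<in>R. q u z * q u2 z) = proj_p R wL wR u u2" using Psum[OF uL u2L] pp by simp
    have m: "proj_p R wL wR u u1 * proj_p R wL wR u u2 * (\<Sum>z\<in>R. q u1 z * q u2 z)
        \<le> proj_p R wL wR u u1 * proj_p R wL wR u u2 * B2"
      using P12 ppnn by (rule mult_left_mono)
    show ?thesis using core e1 e2 main m ppnn b2 by (simp add: abs_le_iff algebra_simps)
  qed
  thus ?thesis unfolding target by (simp add: B2_def N_def mult.commute)
qed



lemma proj_p_nonneg:
  assumes "\<And>v. v \<in> R \<Longrightarrow> wR v > 0" "wL x > 0" "wL y > 0"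
  shows "0 \<le> proj_p R wL wR x y"
proof -
  have "0 \<le> moment R wR 2" unfolding moment_def by (intro mult_nonneg_nonneg sum_nonneg) auto
  thus ?thesis unfolding proj_p_def using assms by simp
qed

theorem mainTheorem8:
  fixes L :: "nat \<Rightarrow> 'a set" and R :: "nat \<Rightarrow> 'b set"
    and wL :: "nat \<Rightarrow> 'a \<Rightarrow> real" and wR :: "nat \<Rightarrow> 'b \<Rightarrow> real"
    and \<delta> :: real
    and u u1 u2 :: "nat \<Rightarrow> 'a"
  assumes finL: "\<And>n. finite (L n)" and finR: "\<And>n. finite (R n)"
    and posL: "\<And>n x. x \<in> L n \<Longrightarrow> wL n x > 0"
    and posR: "\<And>n v. v \<in> R n \<Longrightarrow> wR n v > 0"
    \<comment> \<open>Assumption 1\<close>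
    and A1: "\<And>n x v. x \<in> L n \<Longrightarrow> v \<in> R n \<Longrightarrow>
               wL n x * wR n v / (real (card (R n)) * moment (R n) (wR n) 1) \<le> 1"
    \<comment> \<open>Assumption 2 with parameter \<delta> > 1/10, as n_L, n_R \<rightarrow> \<infinity>\<close>
    and delta: "\<delta> > 1/10"
    and nL_inf: "filterlim (\<lambda>n. card (L n)) at_top at_top"
    and nR_inf: "filterlim (\<lambda>n. card (R n)) at_top at_top"
    and A2_max: "(\<lambda>n. Max (wL n ` L n \<union> wR n ` R n))
                   \<in> O(\<lambda>n. real (card (R n)) powr (1/2 - \<delta>))"
    and A2_min: "(\<lambda>n. Min (wL n ` L n)) \<in> \<Omega>(\<lambda>n. 1)"
    and A2_M2: "(\<lambda>n. moment (R n) (wR n) 2) \<in> O(\<lambda>n. (moment (R n) (wR n) 1)^2)"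
    and A2_M4: "(\<lambda>n. moment (R n) (wR n) 4) \<in> O(\<lambda>n. real (card (R n)) powr (1 - 2 * \<delta>))"
    \<comment> \<open>distinct u, u1, u2 in L\<close>
    and uL: "\<And>n. u n \<in> L n" and u1L: "\<And>n. u1 n \<in> L n" and u2L: "\<And>n. u2 n \<in> L n"
    and dist: "\<And>n. u n \<noteq> u1 n \<and> u n \<noteq> u2 n \<and> u1 n \<noteq> u2 n"
  shows "\<exists>\<epsilon> \<eta>. \<epsilon> \<in> o(\<lambda>n. 1)
     \<and> \<eta> \<in> o(\<lambda>n. proj_p (R n) (wL n) (wR n) (u n) (u1 n) * proj_p (R n) (wL n) (wR n) (u n) (u2 n))
     \<and> (\<forall>\<^sub>F n in at_top.
          triangle_prob (L n) (R n) (wL n) (wR n) (u n) (u1 n) (u2 n)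
          = proj_p (R n) (wL n) (wR n) (u n) (u1 n) * proj_p (R n) (wL n) (wR n) (u n) (u2 n)
            * (moment (R n) (wR n) 1 * moment (R n) (wR n) 3 / (moment (R n) (wR n) 2)^2)
            * (1 / wL n (u n)) * (1 + \<epsilon> n) + \<eta> n)"
proof -
  define N where "N n = real (card (R n))" for n
  define a where "a = 1/2 - \<delta>"
  define pp where "pp n = proj_p (R n) (wL n) (wR n) (u n) (u1 n) * proj_p (R n) (wL n) (wR n) (u n) (u2 n)" for n
  define tgt where "tgt n = pp n * (moment (R n) (wR n) 1 * moment (R n) (wR n) 3 / (moment (R n) (wR n) 2)^2)
            * (1 / wL n (u n))" for n
  define T where "T n = triangle_prob (L n) (R n) (wL n) (wR n) (u n) (u1 n) (u2 n)" for n
  define \<eta> where "\<eta> n = T n - tgt n" for n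
  have Nlim: "filterlim N at_top at_top"
    unfolding N_def by (rule filterlim_compose[OF filterlim_real_sequentially nR_inf])
  have ev1: "eventually (\<lambda>n. card (R n) \<ge> 1) at_top" using nR_inf by (simp add: filterlim_at_top)
  obtain C where C: "C > 0" and evC: "eventually (\<lambda>n. norm (Max (wL n ` L n \<union> wR n ` R n))
       \<le> C * norm (real (card (R n)) powr (1/2 - \<delta>))) at_top"
    using A2_max by (elim landau_o.bigE) auto
  obtain K where K: "K > 0" and evK: "eventually (\<lambda>n. norm (moment (R n) (wR n) 2)
       \<le> K * norm ((moment (R n) (wR n) 1)^2)) at_top"
    using A2_M2 by (elim landau_o.bigE) auto
  define h where "h n = 2 * ((C * N n powr a)^2 * K / N n)" for n
  have bound: "eventually (\<lambda>n. \<bar>\<eta> n\<bar> \<le> pp n * h n \<and> 0 \<le> pp n) at_top"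
    using ev1 evC evK
  proof eventually_elim
    case (elim n)
    have Rne: "R n \<noteq> {}" using elim(1) by auto
    have fin: "finite (wL n ` L n \<union> wR n ` R n)" using finL finR by simp
    have hX: "wL n x \<le> C * N n powr a" if "x \<in> L n" for x
    proof -
      have "wL n x \<le> Max (wL n ` L n \<union> wR n ` R n)" using that fin by (intro Max_ge) auto
      also have "\<dots> \<le> norm (Max (wL n ` L n \<union> wR n ` R n))" by simp
      also have "\<dots> \<le> C * N n powr a" using elim(2) by (simp add: N_def a_def)
      finally show ?thesis .
    qed
    have hK: "moment (R n) (wR n) 2 \<le> K * (moment (R n) (wR n) 1)^2" using elim(3) by simp
    have ib: "\<bar>T n - tgt n\<bar> \<le> pp n * (2 * ((C * N n powr a)^2 * K / real (card (R n))))"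
      unfolding T_def tgt_def pp_def
      by (rule inst_bound[OF finL[where n=n] finR[where n=n] Rne posL[where n=n] posR[where n=n] A1[where n=n] uL[where n=n] u1L[where n=n] u2L[where n=n] _ _ _ hX hK])
         (use dist[where n=n] in auto)
    have "\<bar>\<eta> n\<bar> \<le> pp n * h n"
      using ib by (simp add: \<eta>_def h_def N_def)
    moreover have "0 \<le> pp n"
      unfolding pp_def by (intro mult_nonneg_nonneg proj_p_nonneg) (use posR[where n=n] posL[where n=n] uL u1L u2L in auto)
    ultimately show ?case by simp
  qed
  have hlim: "(h \<longlongrightarrow> 0) at_top"
  proof -
    have lim0: "((\<lambda>n. N n powr (-2*\<delta>)) \<longlongrightarrow> 0) at_top"
      by (rule tendsto_neg_powr[OF _ Nlim]) (use delta in simp)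
    have lim1: "((\<lambda>n. (2 * C^2 * K) * N n powr (-2*\<delta>)) \<longlongrightarrow> 0) at_top"
      using tendsto_mult_right_zero[OF lim0, of "2 * C^2 * K"] by simp
    have ev: "eventually (\<lambda>n. (2 * C^2 * K) * N n powr (-2*\<delta>) = h n) at_top"
      using ev1
    proof eventually_elim
      case (elim n)
      hence Np: "N n > 0" by (simp add: N_def)
      have "(N n powr a)^2 = N n powr (2 * a)"
        using Np by (simp add: powr_power)
      also have "\<dots> = N n powr (-2*\<delta>) * N n"
      proof -
        have "2 * a = -2*\<delta> + 1" by (simp add: a_def)
        hence "N n powr (2 * a) = N n powr (-2*\<delta>) * N n powr 1" by (simp only: powr_add)
        thus ?thesis using Np by simp
      qed
      finally have "(N n powr a)^2 = N n powr (-2*\<delta>) * N n" .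
      thus ?case using Np by (simp add: h_def power_mult_distrib)
    qed
    show ?thesis using lim1 tendsto_cong[OF ev] by simp
  qed
  have eta_o: "\<eta> \<in> o(pp)"
  proof (rule landau_o.smallI)
    fix c :: real assume c: "c > 0"
    have "eventually (\<lambda>n. h n \<le> c) at_top" using order_tendstoD(2)[OF hlim c] by (rule eventually_mono) simp
    with bound show "eventually (\<lambda>n. norm (\<eta> n) \<le> c * norm (pp n)) at_top"
    proof eventually_elim
      case (elim n)
      have "\<bar>\<eta> n\<bar> \<le> pp n * h n" using elim by simp
      also have "\<dots> \<le> pp n * c" using elim by (intro mult_left_mono) auto
      finally show ?case using elim by (simp add: mult.commute)
    qed
  qed
  show ?thesis
  proof (intro exI conjI)
    show "(\<lambda>n. 0::real) \<in> o(\<lambda>n. 1)" by simp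
    show "\<eta> \<in> o(\<lambda>n. proj_p (R n) (wL n) (wR n) (u n) (u1 n) * proj_p (R n) (wL n) (wR n) (u n) (u2 n))"
      using eta_o unfolding pp_def .
    show "\<forall>\<^sub>F n in at_top. triangle_prob (L n) (R n) (wL n) (wR n) (u n) (u1 n) (u2 n)
          = proj_p (R n) (wL n) (wR n) (u n) (u1 n) * proj_p (R n) (wL n) (wR n) (u n) (u2 n)
            * (moment (R n) (wR n) 1 * moment (R n) (wR n) 3 / (moment (R n) (wR n) 2)^2)
            * (1 / wL n (u n)) * (1 + 0) + \<eta> n"
      by (simp add: \<eta>_def T_def tgt_def pp_def)
  qed
qed


end
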